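(* Let $n>m>0$ be integers. For any $s_0\in(0,1)$ and $\alpha\in\left(-\frac{n-m+1}{2}s_0,0\right)$ there is a constant $C=C(s_0,n,m)>0$ such that $\int_{(\mathbb{S}^{n-1})^{m}}|\det(w_{t_1}\cdot w_{t_2})_{1\le t_1,t_2\le m}|^{\alpha}\,d\sigma(w_1)\cdots d\sigma(w_m)\le C.$
   Context: $\sigma$ is the standard surface measure on the unit sphere $\mathbb{S}^{n-1}\subset\mathbb{R}^n$, and $(w_{t_1}\cdot w_{t_2})$ is the $m\times m$ Gram matrix of the vectors $w_1,\dots,w_m\in\mathbb{S}^{n-1}$. *)

theory Defs
  imports "HOL-Analysis.Analysis"
begin

text \<open>Standard surface measure on the unit sphere S^{n-1} of real^'n (n = CARD('n)),
  defined via the cone construction:  sigma(A) = n * lambda({r x | x in A, 0 < r <= 1}),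
  i.e. n times the push-forward of Lebesgue measure on the punctured closed unit ball
  under the radial projection x |-> x / |x|.\<close>
definition sphere_measure :: "(real ^ 'n) measure" where
  "sphere_measure =
     density
       (distr (restrict_space lborel (cball (0::real^'n) 1 - {0}))
              (restrict_space borel (sphere (0::real^'n) 1))
              (\<lambda>x. x /\<^sub>R norm x))
       (\<lambda>_. ennreal (real CARD('n)))"

definition gram :: "('m::finite \<Rightarrow> real ^ 'n) \<Rightarrow> real ^ 'm ^ 'm" where
  "gram w = (\<chi> i j. w i \<bullet> w j)"

definition gram_power :: "real \<Rightarrow> ('m::finite \<Rightarrow> real ^ 'n) \<Rightarrow> ennreal" where
  "gram_power \<alpha> w = (if det (gram w) = 0 then \<infinity> else ennreal (\<bar>det (gram w)\<bar> powr \<alpha>))"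

end

theory Submission
  imports Defs
begin


definition gmat :: "'m set \<Rightarrow> ('m::finite \<Rightarrow> real^'n) \<Rightarrow> real^'m^'m" where
  "gmat S w = (\<chi> i j. if i \<in> S \<and> j \<in> S then w i \<bullet> w j else if i = j then 1 else 0)"

definition gdet :: "'m set \<Rightarrow> ('m::finite \<Rightarrow> real^'n) \<Rightarrow> real" where
  "gdet S w = det (gmat S w)"

lemma span_image_sum:
  fixes w :: "'m \<Rightarrow> 'a::real_vector"
  assumes "finite S" "y \<in> span (w ` S)"
  shows "\<exists>c. y = (\<Sum>i\<in>S. c i *\<^sub>R w i)"
  using assms
proof (induction S arbitrary: y rule: finite_induct)
  case empty
  then show ?case by simp
next
  case (insert k S)
  from insert.prems obtain a where "y - a *\<^sub>R w k \<in> span (w ` S)"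
    by (auto simp: span_insert)
  then obtain c where c: "y - a *\<^sub>R w k = (\<Sum>i\<in>S. c i *\<^sub>R w i)" using insert.IH by blast
  have "(\<Sum>i\<in>insert k S. (c(k:=a)) i *\<^sub>R w i) = a *\<^sub>R w k + (\<Sum>i\<in>S. c i *\<^sub>R w i)"
    using insert.hyps by (simp add: sum.insert) (intro sum.cong, auto)
  with c show ?case by (metis diff_add_cancel add.commute)
qed

lemma det_sub_rows:
  fixes A :: "real^'m::finite^'m"
  assumes "k \<notin> S"
  shows "det (\<chi> r. if r = k then row k A - (\<Sum>i\<in>S. c i *s row i A) else row r A) = det A"
proof -
  have "- (\<Sum>i\<in>S. c i *s row i A) \<in> vec.span {row j A |j. j \<noteq> k}"
    using assms by (intro vec.span_neg vec.span_sum vec.span_scale vec.span_base) auto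
  from det_row_span[OF this] show ?thesis by (simp only: diff_conv_add_uminus)
qed

lemma infdist_decomp:
  fixes x :: "'a::euclidean_space"
  assumes "y \<in> span A" "\<And>v. v \<in> span A \<Longrightarrow> orthogonal z v" "x = y + z"
  shows "infdist x (span A) = norm z"
proof (rule antisym)
  show "infdist x (span A) \<le> norm z"
    using infdist_le[OF assms(1), of x] assms(3) by (simp add: dist_norm)
  have "norm z \<le> dist x v" if "v \<in> span A" for v
  proof -
    have o: "orthogonal z (y - v)" using assms(2) span_diff[OF assms(1) that] by blast
    have "(norm (x - v))^2 = (norm z)^2 + (norm (y - v))^2"
      using o assms(3) norm_add_Pythagorean[of z "y - v"]
      by (simp add: algebra_simps)
    then have "(norm z)^2 \<le> (norm (x-v))^2" by simp
    then show ?thesis by (simp add: dist_norm power2_le_iff_abs_le)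
  qed
  then show "norm z \<le> infdist x (span A)"
    by (subst infdist_notempty) (auto intro!: cINF_greatest span_zero)
qed

lemma gdet_insert:
  fixes w :: "'m::finite \<Rightarrow> real^'n"
  assumes kS: "k \<notin> S"
  shows "gdet (insert k S) w = gdet S w * (infdist (w k) (span (w ` S)))^2"
proof -
  obtain y z where y: "y \<in> span (w ` S)" and zo: "\<And>v. v \<in> span (w ` S) \<Longrightarrow> orthogonal z v"
    and wk: "w k = y + z"
    using orthogonal_subspace_decomp_exists by metis
  have fin: "finite S" by simp
  obtain c where yc: "y = (\<Sum>i\<in>S. c i *\<^sub>R w i)" using span_image_sum[OF fin y] by blast
  have zw: "z \<bullet> w j = 0" if "j \<in> S" for j
    using zo[of "w j"] that by (simp add: span_base orthogonal_def)
  have zy: "z \<bullet> y = 0" using zo[OF y] by (simp add: orthogonal_def)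
  have infd: "infdist (w k) (span (w ` S)) = norm z"
    by (rule infdist_decomp[OF y zo wk])
  have ysum: "(\<Sum>i\<in>S. c i * (w i \<bullet> v)) = y \<bullet> v" for v
    by (simp add: yc inner_sum_left)
  have ysum': "(\<Sum>i\<in>S. c i * (v \<bullet> w i)) = v \<bullet> y" for v
    by (simp add: yc inner_sum_right)
  define M where "M = gmat (insert k S) w"
  define M1 where "M1 = (\<chi> r. if r = k then row k M - (\<Sum>i\<in>S. c i *s row i M) else row r M)"
  have d1: "det M1 = det M" unfolding M1_def by (rule det_sub_rows[OF kS])
  have M1e: "M1 $ r $ s = (if r = k then (if s = k then z \<bullet> z else 0) else M $ r $ s)" for r s
  proof (cases "r = k")
    case True
    have "M1 $ r $ s = M $ k $ s - (\<Sum>i\<in>S. c i * M $ i $ s)"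
      using True by (simp add: M1_def row_def sum_component)
    also have "\<dots> = (if s = k then z \<bullet> z else 0)"
    proof -
      consider "s = k" | "s \<in> S" | "s \<notin> insert k S" by blast
      then show ?thesis
      proof cases
        case 1
        then have "M $ k $ s - (\<Sum>i\<in>S. c i * M $ i $ s) = w k \<bullet> w k - (\<Sum>i\<in>S. c i * (w i \<bullet> w k))"
          using kS by (auto simp: M_def gmat_def intro!: sum.cong)
        also have "\<dots> = z \<bullet> z" using 1 ysum[of "w k"] wk zy
          by (simp add: inner_add_left inner_add_right inner_commute)
        finally show ?thesis using 1 by simp
      next
        case 2
        then have "M $ k $ s - (\<Sum>i\<in>S. c i * M $ i $ s) = w k \<bullet> w s - (\<Sum>i\<in>S. c i * (w i \<bullet> w s))"
          using kS by (auto simp: M_def gmat_def intro!: sum.cong)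
        also have "\<dots> = 0" using 2 ysum[of "w s"] wk zw[OF 2]
          by (simp add: inner_add_left)
        finally show ?thesis using 2 kS by auto
      next
        case 3
        then have "M $ k $ s - (\<Sum>i\<in>S. c i * M $ i $ s) = 0"
          by (auto simp: M_def gmat_def intro!: sum.neutral)
        then show ?thesis using 3 by auto
      qed
    qed
    finally show ?thesis using True by simp
  next
    case False
    then show ?thesis by (simp add: M1_def row_def)
  qed
  define M2 where "M2 = transpose M1"
  define M3 where "M3 = (\<chi> r. if r = k then row k M2 - (\<Sum>i\<in>S. c i *s row i M2) else row r M2)"
  have d3: "det M3 = det M2" unfolding M3_def by (rule det_sub_rows[OF kS])
  define G where "G = gmat S w"
  have M3e: "M3 = (\<chi> r. if r = k then (z \<bullet> z) *s row k G else row r G)"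
  proof -
    have "M3 $ r $ s = (\<chi> r. if r = k then (z \<bullet> z) *s row k G else row r G) $ r $ s" for r s
    proof (cases "r = k")
      case True
      have "M3 $ r $ s = M1 $ s $ k - (\<Sum>i\<in>S. c i * M1 $ s $ i)"
        using True by (simp add: M3_def M2_def row_def sum_component transpose_def)
      also have "\<dots> = (if s = k then z \<bullet> z else 0)"
      proof -
        consider "s = k" | "s \<in> S" | "s \<notin> insert k S" by blast
        then show ?thesis
        proof cases
          case 1
          then show ?thesis using kS by (auto simp: M1e intro!: sum.neutral)
        next
          case 2
          then have ne: "s \<noteq> k" using kS by auto
          have "M1 $ s $ k - (\<Sum>i\<in>S. c i * M1 $ s $ i) = w s \<bullet> w k - (\<Sum>i\<in>S. c i * (w s \<bullet> w i))"
            using kS 2 ne by (auto simp: M1e M_def gmat_def intro!: sum.cong)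
          also have "\<dots> = 0" using 2 ysum'[of "w s"] wk zw[OF 2]
            by (simp add: inner_add_right inner_commute)
          finally show ?thesis using ne by simp
        next
          case 3
          then have "M1 $ s $ k - (\<Sum>i\<in>S. c i * M1 $ s $ i) = 0"
            by (auto simp: M1e M_def gmat_def intro!: sum.neutral)
          then show ?thesis using 3 by auto
        qed
      qed
      finally show ?thesis using True kS by (auto simp: G_def gmat_def row_def)
    next
      case False
      then show ?thesis using kS
        by (auto simp: M3_def M2_def row_def transpose_def M1e M_def G_def gmat_def inner_commute)
    qed
    then show ?thesis by (simp add: vec_eq_iff)
  qed
  have "det M3 = (z \<bullet> z) * det (\<chi> r. if r = k then row k G else row r G)"
    unfolding M3e by (rule det_row_mul)
  also have "(\<chi> r. if r = k then row k G else row r G) = G"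
    by (simp add: vec_eq_iff row_def)
  finally have "det M3 = (z \<bullet> z) * det G" .
  then have "det M = (z \<bullet> z) * det G" using d1 d3 by (simp add: M2_def det_transpose)
  then show ?thesis
    by (simp add: gdet_def M_def G_def infd power2_norm_eq_inner)
qed

lemma gdet_empty: "gdet {} w = 1"
proof -
  have "gmat {} w = mat 1" by (simp add: gmat_def mat_def vec_eq_iff)
  then show ?thesis by (simp add: gdet_def)
qed

lemma gdet_UNIV: "gdet UNIV w = det (gram w)"
  by (simp add: gdet_def gmat_def gram_def)

lemma gdet_nonneg: "0 \<le> gdet S (w :: 'm::finite \<Rightarrow> real^'n)"
proof -
  have "finite S" by simp
  then show ?thesis
  proof (induction S rule: finite_induct)
    case empty then show ?case by (simp add: gdet_empty)
  next
    case (insert k S) then show ?case by (simp add: gdet_insert)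
  qed
qed

lemma gdet_cong: assumes "\<And>i. i \<in> S \<Longrightarrow> w i = w' i" shows "gdet S w = gdet S w'"
proof -
  have "\<And>i j. (if i\<in>S \<and> j\<in>S then w i \<bullet> w j else if i = j then 1 else 0) = (if i\<in>S \<and> j\<in>S then w' i \<bullet> w' j else if i = j then 1 else (0::real))"
    using assms by auto
  then show ?thesis by (simp add: gdet_def gmat_def)
qed

definition GP :: "'m set \<Rightarrow> real \<Rightarrow> ('m::finite \<Rightarrow> real^'n) \<Rightarrow> ennreal" where
  "GP S a w = (if gdet S w = 0 then \<infinity> else ennreal (\<bar>gdet S w\<bar> powr a))"

definition gfun :: "real \<Rightarrow> (real^'n) set \<Rightarrow> real^'n \<Rightarrow> ennreal" where
  "gfun a V y = (if infdist y V = 0 then \<infinity> else ennreal (infdist y V powr (2*a)))"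

lemma GP_ne0: "GP S a w \<noteq> 0" by (simp add: GP_def)
lemma gfun_ne0: "gfun a V y \<noteq> 0" by (simp add: gfun_def)

lemma GP_insert:
  fixes w :: "'m::finite \<Rightarrow> real^'n"
  assumes kS: "k \<notin> S"
  shows "GP (insert k S) a w = GP S a w * gfun a (span (w ` S)) (w k)"
proof -
  let ?d = "gdet S w" and ?r = "infdist (w k) (span (w ` S))"
  have eq: "gdet (insert k S) w = ?d * ?r^2" by (rule gdet_insert[OF kS])
  have d0: "?d \<ge> 0" by (rule gdet_nonneg)
  have r0: "?r \<ge> 0" by (rule infdist_nonneg)
  show ?thesis
  proof (cases "?d = 0 \<or> ?r = 0")
    case True
    have t1: "GP (insert k S) a w = \<infinity>" using True eq by (auto simp: GP_def)
    have t2: "GP S a w * gfun a (span (w ` S)) (w k) = \<infinity>"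
    proof (cases "?d = 0")
      case True
      then show ?thesis using gfun_ne0[of a "span (w ` S)" "w k"] by (simp add: GP_def ennreal_top_mult)
    next
      case False
      then have "?r = 0" using \<open>?d = 0 \<or> ?r = 0\<close> by simp
      then show ?thesis using GP_ne0[of S a w] by (simp add: gfun_def ennreal_mult_top)
    qed
    show ?thesis using t1 t2 by simp
  next
    case False
    then have p: "?d > 0" "?r > 0" using d0 r0 by auto
    have e1: "(?r^2) powr a = ?r powr (2*a)"
      using p by (metis powr_powr powr_realpow of_nat_numeral)
    have e2: "\<bar>?d * ?r^2\<bar> powr a = ?d powr a * ?r powr (2*a)"
      using p by (simp add: powr_mult abs_mult e1[symmetric])
    have ne: "gdet (insert k S) w \<noteq> 0" using p eq by simp
    have "GP (insert k S) a w = ennreal (?d powr a * ?r powr (2*a))"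
      unfolding GP_def using ne eq e2 by simp
    also have "\<dots> = ennreal (?d powr a) * ennreal (?r powr (2*a))"
      by (rule ennreal_mult) auto
    also have "\<dots> = GP S a w * gfun a (span (w ` S)) (w k)"
      using p by (simp add: GP_def gfun_def)
    finally show ?thesis .
  qed
qed


typedef 'a wo = "UNIV :: 'a set" morphisms wrep wabs by simp

instantiation wo :: (finite) linorder
begin
definition less_eq_wo :: "'a wo \<Rightarrow> 'a wo \<Rightarrow> bool" where
  "less_eq_wo x y \<longleftrightarrow> to_nat (wrep x) \<le> to_nat (wrep y)"
definition less_wo :: "'a wo \<Rightarrow> 'a wo \<Rightarrow> bool" where
  "less_wo x y \<longleftrightarrow> to_nat (wrep x) < to_nat (wrep y)"
instance
proof
  fix x y z :: "'a wo"
  show "(x < y) = (x \<le> y \<and> \<not> y \<le> x)" by (auto simp: less_eq_wo_def less_wo_def)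
  show "x \<le> x" by (simp add: less_eq_wo_def)
  show "x \<le> y \<Longrightarrow> y \<le> z \<Longrightarrow> x \<le> z" by (simp add: less_eq_wo_def)
  show "x \<le> y \<Longrightarrow> y \<le> x \<Longrightarrow> x = y"
    by (simp add: less_eq_wo_def wrep_inject[symmetric])
  show "x \<le> y \<or> y \<le> x" by (auto simp: less_eq_wo_def)
qed
end

instance wo :: (finite) wellorder
proof
  fix P :: "'a wo \<Rightarrow> bool" and a
  assume H: "\<And>x. (\<And>y. y < x \<Longrightarrow> P y) \<Longrightarrow> P x"
  show "P a"
  proof (induction a rule: measure_induct_rule[of "\<lambda>x. to_nat (wrep x)"])
    case (less x)
    then show ?case using H by (auto simp: less_wo_def)
  qed
qed

instance wo :: (finite) finite
proof
  have "UNIV = range (wabs :: 'a \<Rightarrow> 'a wo)" by (metis surj_def wabs_cases)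
  then show "finite (UNIV :: 'a wo set)" by (metis finite finite_imageI)
qed

definition hmap :: "real^'n::finite \<Rightarrow> real^('n wo)" where "hmap x = (\<chi> i. x $ wrep i)"
definition hinv :: "real^('n::finite wo) \<Rightarrow> real^'n" where "hinv y = (\<chi> i. y $ wabs i)"

lemma hmap_hinv[simp]: "hmap (hinv y) = y" by (simp add: hmap_def hinv_def vec_eq_iff wrep_inverse)
lemma hinv_hmap[simp]: "hinv (hmap x) = x" by (simp add: hmap_def hinv_def vec_eq_iff wabs_inverse)

lemma linear_hmap: "linear hmap" by (auto simp: linear_iff hmap_def vec_eq_iff)
lemma linear_hinv: "linear hinv" by (auto simp: linear_iff hinv_def vec_eq_iff)

lemma norm_hmap[simp]: "norm (hmap x) = norm x"
proof -
  have "(\<Sum>i\<in>UNIV. (norm (x $ wrep i))^2) = (\<Sum>j\<in>UNIV. (norm (x $ j))^2)"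
    by (rule sum.reindex_bij_witness[where j=wrep and i=wabs]) (auto simp: wrep_inverse wabs_inverse)
  then show ?thesis by (simp add: norm_vec_def L2_set_def hmap_def)
qed

lemma norm_hinv[simp]: "norm (hinv y) = norm y"
  by (metis hmap_hinv norm_hmap)

lemma cont_hmap: "continuous_on S hmap"
  by (simp add: linear_continuous_on linear_conv_bounded_linear[symmetric] linear_hmap)
lemma cont_hinv: "continuous_on S hinv"
  by (simp add: linear_continuous_on linear_conv_bounded_linear[symmetric] linear_hinv)

lemma meas_hmap[measurable]: "hmap \<in> borel_measurable borel"
  by (intro borel_measurable_continuous_onI cont_hmap)
lemma meas_hinv[measurable]: "hinv \<in> borel_measurable borel"
  by (intro borel_measurable_continuous_onI cont_hinv)

lemma prod_Basis_cart: "(\<Prod>c\<in>(Basis::(real^'k::finite) set). x \<bullet> c) = (\<Prod>i\<in>UNIV. x$i)"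
  by (simp add: Basis_vec_def cart_eq_inner_axis axis_eq_axis prod.UNION_disjoint)

lemma emeasure_box_cart:
  fixes a b :: "real^'k::finite"
  shows "emeasure lborel (box a b) = (if \<forall>i. a$i \<le> b$i then ennreal (\<Prod>i\<in>UNIV. b$i - a$i) else 0)"
proof -
  have "(\<Prod>c\<in>Basis. (b - a) \<bullet> c) = (\<Prod>i\<in>UNIV. b$i - a$i)"
    by (simp only: prod_Basis_cart vector_minus_component)
  moreover have "(\<forall>c\<in>Basis. a \<bullet> c \<le> b \<bullet> c) \<longleftrightarrow> (\<forall>i. a$i \<le> b$i)"
    by (simp add: Basis_vec_def cart_eq_inner_axis)
  ultimately show ?thesis by (simp add: emeasure_lborel_box_eq)
qed

lemma distr_hmap: "distr lborel borel hmap = (lborel :: (real^('n::finite wo)) measure)"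
proof (rule lborel_eqI[symmetric])
  show "sets (distr lborel borel hmap) = sets (borel :: (real^('n wo)) measure)" by simp
  fix l u :: "real^('n wo)"
  assume lu: "\<And>b. b \<in> Basis \<Longrightarrow> l \<bullet> b \<le> u \<bullet> b"
  have pre: "hmap -` box l u = box (hinv l) (hinv u)"
  proof (intro set_eqI)
    fix x :: "real^'n"
    have "x \<in> hmap -` box l u \<longleftrightarrow> (\<forall>i. l$i < x$(wrep i) \<and> x$(wrep i) < u$i)"
      by (simp add: mem_box_cart hmap_def)
    also have "\<dots> \<longleftrightarrow> (\<forall>j. l$(wabs j) < x$j \<and> x$j < u$(wabs j))"
    proof
      assume H: "\<forall>i. l$i < x$(wrep i) \<and> x$(wrep i) < u$i"
      show "\<forall>j. l$(wabs j) < x$j \<and> x$j < u$(wabs j)"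
      proof
        fix j show "l$(wabs j) < x$j \<and> x$j < u$(wabs j)" using H[rule_format, of "wabs j"] by (simp add: wabs_inverse)
      qed
    next
      assume H: "\<forall>j. l$(wabs j) < x$j \<and> x$j < u$(wabs j)"
      show "\<forall>i. l$i < x$(wrep i) \<and> x$(wrep i) < u$i"
      proof
        fix i show "l$i < x$(wrep i) \<and> x$(wrep i) < u$i" using H[rule_format, of "wrep i"] by (simp add: wrep_inverse)
      qed
    qed
    also have "\<dots> \<longleftrightarrow> x \<in> box (hinv l) (hinv u)"
      by (simp add: mem_box_cart hinv_def)
    finally show "x \<in> hmap -` box l u \<longleftrightarrow> x \<in> box (hinv l) (hinv u)" .
  qed
  have lu': "l$i \<le> u$i" for i
  proof -
    have "l \<bullet> axis i 1 \<le> u \<bullet> axis i 1" by (rule lu) (simp add: axis_in_Basis_iff)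
    then show ?thesis by (simp only: cart_eq_inner_axis)
  qed
  have "emeasure (distr lborel borel hmap) (box l u) = emeasure lborel (hmap -` box l u \<inter> space lborel)"
    by (rule emeasure_distr) (simp_all add: measurable_lborel1)
  also have "\<dots> = emeasure lborel (box (hinv l) (hinv u))" by (simp only: pre space_lborel space_borel Int_UNIV_right)
  also have "\<dots> = ennreal (\<Prod>i\<in>UNIV. hinv u $ i - hinv l $ i)"
    using lu' by (simp add: emeasure_box_cart hinv_def)
  also have "(\<Prod>i\<in>UNIV. hinv u $ i - hinv l $ i) = (\<Prod>j\<in>UNIV. u$j - l$j)"
    unfolding hinv_def by (rule prod.reindex_bij_witness[where j=wabs and i=wrep]) (auto simp: wrep_inverse wabs_inverse)
  also have "(\<Prod>j\<in>UNIV. u$j - l$j) = (\<Prod>c\<in>Basis. (u - l) \<bullet> c)"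
    by (simp only: prod_Basis_cart vector_minus_component)
  finally show "emeasure (distr lborel borel hmap) (box l u) = (\<Prod>b\<in>Basis. (u - l) \<bullet> b)"
    using lu' by (simp add: prod_nonneg)
qed

lemma emeasure_via_wo:
  fixes A :: "(real^'n::finite) set"
  assumes "A \<in> sets borel"
  shows "emeasure lborel A = emeasure lborel (hinv -` A)"
proof -
  have m: "hmap \<in> measurable lborel (borel :: (real^('n wo)) measure)"
    using meas_hmap by simp
  have s: "hinv -` A \<in> sets (borel :: (real^('n wo)) measure)"
    using measurable_sets_borel[OF meas_hinv assms] by (simp only: space_borel Int_UNIV_right)
  have "emeasure lborel (hinv -` A) = emeasure (distr lborel borel hmap) (hinv -` A)"
    by (subst distr_hmap) (rule refl)
  also have "\<dots> = emeasure lborel (hmap -` (hinv -` A) \<inter> space lborel)"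
    by (rule emeasure_distr[OF m s])
  also have "hmap -` (hinv -` A) \<inter> space lborel = A" by auto
  finally show ?thesis by simp
qed

lemma orth_wo:
  fixes f :: "real^'k::{finite,wellorder} \<Rightarrow> real^'k::_"
  assumes f: "orthogonal_transformation f" and C: "compact C"
  shows "emeasure lborel (f -` C) = emeasure lborel C"
proof -
  let ?g = "inv f"
  have g: "orthogonal_transformation ?g" by (rule orthogonal_transformation_inv[OF f])
  have bij: "bij f" by (rule orthogonal_transformation_bij[OF f])
  have pre: "f -` C = ?g ` C" using bij by (simp add: bij_vimage_eq_inv_image)
  have gC: "compact (?g ` C)"
    using g C by (intro compact_continuous_image linear_continuous_on)
      (simp add: orthogonal_transformation_linear linear_conv_bounded_linear[symmetric])
  have gCs: "?g ` C \<in> sets lborel" using gC by (simp add: borel_compact)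
  have Cs: "C \<in> sets lborel" using C by (simp add: borel_compact)
  have "emeasure lborel (?g ` C) = emeasure lebesgue (?g ` C)"
    using gCs by (simp add: sets_completionI_sets)
  also have "\<dots> = ennreal (measure lebesgue (?g ` C))"
    by (rule emeasure_eq_ennreal_measure[OF fmeasurableD2[OF lmeasurable_compact[OF gC]]])
  also have "\<dots> = ennreal (measure lebesgue C)"
    by (simp only: measure_orthogonal_image[OF g lmeasurable_compact[OF C]])
  also have "\<dots> = emeasure lebesgue C"
    by (rule emeasure_eq_ennreal_measure[OF fmeasurableD2[OF lmeasurable_compact[OF C]], symmetric])
  also have "\<dots> = emeasure lborel C"
    using Cs by (simp add: sets_completionI_sets)
  finally show ?thesis using pre by simp
qed

lemma orth_invariant:
  fixes f :: "real^'n::finite \<Rightarrow> real^'n"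
  assumes f: "orthogonal_transformation f" and C: "compact C"
  shows "emeasure lborel (f -` C) = emeasure lborel C"
proof -
  define f' where "f' = (\<lambda>y. hmap (f (hinv y)))"
  have lf: "linear f" using f by (simp add: orthogonal_transformation_linear)
  have f': "orthogonal_transformation f'"
    unfolding orthogonal_transformation f'_def
  proof
    show "linear (\<lambda>y. hmap (f (hinv y)))"
      using linear_compose[OF linear_compose[OF linear_hinv lf] linear_hmap] by (simp add: o_def)
    show "\<forall>v. norm (hmap (f (hinv v))) = norm v"
      using f by (simp add: orthogonal_transformation)
  qed
  have cf: "continuous_on UNIV f" using lf
    by (simp add: linear_continuous_on linear_conv_bounded_linear[symmetric])
  have mf: "f \<in> borel_measurable borel" by (intro borel_measurable_continuous_onI cf)
  have Cb: "C \<in> sets borel" using C by (simp add: borel_compact)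
  have hC: "compact (hinv -` C)"
  proof -
    have "hinv -` C = hmap ` C" by (auto simp: image_iff) (metis hmap_hinv)
    then show ?thesis using C by (metis compact_continuous_image cont_hmap)
  qed
  have "emeasure lborel (f -` C) = emeasure lborel (hinv -` f -` C)"
    using measurable_sets_borel[OF mf Cb] by (intro emeasure_via_wo) simp
  also have "hinv -` f -` C = f' -` (hinv -` C)" by (auto simp: f'_def)
  also have "emeasure lborel (f' -` (hinv -` C)) = emeasure lborel (hinv -` C)"
    by (rule orth_wo[OF f' hC])
  also have "\<dots> = emeasure lborel C" using Cb by (simp add: emeasure_via_wo)
  finally show ?thesis .
qed


lemma unit_proj_le_infdist:
  fixes V :: "('a::euclidean_space) set"
  assumes V: "subspace V" and o: "\<And>v. v \<in> V \<Longrightarrow> orthogonal v u" and u: "norm u = 1"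
  shows "\<bar>u \<bullet> x\<bar> \<le> infdist x V"
proof -
  have "\<bar>u \<bullet> x\<bar> \<le> dist x v" if "v \<in> V" for v
  proof -
    have "u \<bullet> v = 0" using o[OF that] by (simp add: orthogonal_def inner_commute)
    then have "u \<bullet> x = u \<bullet> (x - v)" by (simp add: inner_diff_right)
    also have "\<bar>\<dots>\<bar> \<le> norm u * norm (x - v)" by (rule Cauchy_Schwarz_ineq2)
    finally show ?thesis using u by (simp add: dist_norm)
  qed
  moreover have "V \<noteq> {}" using subspace_0[OF V] by auto
  ultimately show ?thesis
    by (subst infdist_notempty) (auto intro!: cINF_greatest)
qed

lemma emeasure_cbox_cart:
  fixes a b :: "real^'k::finite"
  assumes "\<And>i. a$i \<le> b$i"
  shows "emeasure lborel (cbox a b) = ennreal (\<Prod>i\<in>UNIV. b$i - a$i)"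
proof -
  have "(\<Prod>c\<in>Basis. (b - a) \<bullet> c) = (\<Prod>i\<in>UNIV. b$i - a$i)"
    by (simp only: prod_Basis_cart vector_minus_component)
  moreover have "(\<forall>c\<in>Basis. a \<bullet> c \<le> b \<bullet> c)"
    using assms by (simp add: Basis_vec_def cart_eq_inner_axis)
  ultimately show ?thesis by (simp add: emeasure_lborel_cbox_eq)
qed

lemma tube_bound:
  fixes V :: "(real^'n::finite) set"
  assumes V: "subspace V" and d: "dim V < CARD('n)" and t: "0 < t"
  shows "emeasure lborel (cball 0 1 \<inter> {x. infdist x V \<le> t}) \<le> ennreal (2^CARD('n) * t^(CARD('n) - dim V))"
proof -
  define W where "W = {y. \<forall>x\<in>V. orthogonal x y}"
  have W: "subspace W" unfolding W_def by (rule subspace_orthogonal_to_vectors)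
  have dW: "dim W + dim V = CARD('n)"
    using dim_subspace_orthogonal_to_vectors[OF V subspace_UNIV] by (simp add: W_def)
  obtain BV where BV: "BV \<subseteq> V" "pairwise orthogonal BV" "\<And>x. x \<in> BV \<Longrightarrow> norm x = 1"
      "independent BV" "card BV = dim V"
    using orthonormal_basis_subspace[OF V] by metis
  obtain BW where BW: "BW \<subseteq> W" "pairwise orthogonal BW" "\<And>x. x \<in> BW \<Longrightarrow> norm x = 1"
      "independent BW" "card BW = dim W"
    using orthonormal_basis_subspace[OF W] by metis
  have fBV: "finite BV" using BV(4) independent_imp_finite by blast
  have fBW: "finite BW" using BW(4) independent_imp_finite by blast
  have "card BW \<le> card (UNIV :: 'n set)" using dW BW(5) by simp
  then obtain J :: "'n set" where J: "card J = card BW" "finite J" by (metis obtain_subset_with_card_n)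
  have cJ: "card (- J) = card BV"
    using J dW BW(5) BV(5) by (simp add: Compl_eq_Diff_UNIV card_Diff_subset)
  obtain p1 where p1: "bij_betw p1 J BW" using finite_same_card_bij[OF J(2) fBW J(1)] by blast
  obtain p2 where p2: "bij_betw p2 (- J) BV" using finite_same_card_bij[OF _ fBV cJ] by auto
  define p where "p i = (if i \<in> J then p1 i else p2 i)" for i
  have pJ: "i \<in> J \<Longrightarrow> p i \<in> BW" for i using p1 by (auto simp: p_def bij_betw_def)
  have pnJ: "i \<notin> J \<Longrightarrow> p i \<in> BV" for i using p2 by (auto simp: p_def bij_betw_def)
  have pn: "norm (p i) = 1" for i using pJ pnJ BV(3) BW(3) by (cases "i \<in> J") auto
  have po: "orthogonal (p i) (p j)" if "i \<noteq> j" for i j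
  proof (cases "i \<in> J"; cases "j \<in> J")
    assume "i \<in> J" "j \<in> J"
    then have "p i \<noteq> p j" using p1 that by (auto simp: p_def bij_betw_def inj_on_def)
    then show ?thesis using BW(2) pJ \<open>i \<in> J\<close> \<open>j \<in> J\<close> by (auto simp: pairwise_def)
  next
    assume "i \<notin> J" "j \<notin> J"
    then have "p i \<noteq> p j" using p2 that by (auto simp: p_def bij_betw_def inj_on_def)
    then show ?thesis using BV(2) pnJ \<open>i \<notin> J\<close> \<open>j \<notin> J\<close> by (auto simp: pairwise_def)
  next
    assume "i \<in> J" "j \<notin> J"
    then have "p i \<in> W" "p j \<in> V" using pJ pnJ BV(1) BW(1) by auto
    then show ?thesis by (auto simp: W_def orthogonal_commute)
  next
    assume "i \<notin> J" "j \<in> J"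
    then have "p j \<in> W" "p i \<in> V" using pJ pnJ BV(1) BW(1) by auto
    then show ?thesis by (auto simp: W_def)
  qed
  define A :: "real^'n^'n" where "A = (\<chi> i. p i)"
  have rowA: "row i A = p i" for i by (simp add: A_def row_def vec_eq_iff)
  have oA: "orthogonal_matrix A"
    unfolding orthogonal_matrix_orthonormal_rows rowA using pn po by auto
  define f where "f x = A *v x" for x
  have lf: "linear f" unfolding f_def by simp
  have of: "orthogonal_transformation f"
  proof -
    have "f = (\<lambda>x. A *v x)" by (simp add: fun_eq_iff f_def)
    then show ?thesis unfolding orthogonal_transformation_matrix using lf oA by simp
  qed
  have fc: "f x $ i = p i \<bullet> x" for x i by (simp add: f_def matrix_vector_mul_component A_def)
  define a :: "real^'n" where "a = (\<chi> i. if i \<in> J then -t else -1)"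
  define b :: "real^'n" where "b = (\<chi> i. if i \<in> J then t else 1)"
  have sub: "cball 0 1 \<inter> {x. infdist x V \<le> t} \<subseteq> f -` cbox a b"
  proof
    fix x assume x: "x \<in> cball 0 1 \<inter> {x. infdist x V \<le> t}"
    have "\<bar>p i \<bullet> x\<bar> \<le> (if i \<in> J then t else 1)" for i
    proof (cases "i \<in> J")
      case True
      have "\<bar>p i \<bullet> x\<bar> \<le> infdist x V"
      proof (rule unit_proj_le_infdist[OF V _ pn])
        fix v assume "v \<in> V" then show "orthogonal v (p i)" using pJ[OF True] BW(1) by (auto simp: W_def)
      qed
      then show ?thesis using x True by auto
    next
      case False
      have "\<bar>p i \<bullet> x\<bar> \<le> norm (p i) * norm x" by (rule Cauchy_Schwarz_ineq2)
      then show ?thesis using x False pn by auto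
    qed
    then have "\<forall>i. (if i \<in> J then -t else -1) \<le> p i \<bullet> x \<and> p i \<bullet> x \<le> (if i \<in> J then t else 1)"
      by (metis abs_le_iff minus_le_iff)
    then show "x \<in> f -` cbox a b"
      by (simp add: mem_box_cart fc a_def b_def)
  qed
  have cf: "continuous_on UNIV f" using lf
    by (simp add: linear_continuous_on linear_conv_bounded_linear[symmetric])
  have mf: "f \<in> borel_measurable borel" by (intro borel_measurable_continuous_onI cf)
  have "emeasure lborel (cball 0 1 \<inter> {x. infdist x V \<le> t}) \<le> emeasure lborel (f -` cbox a b)"
    using measurable_sets_borel[OF mf borel_closed[OF closed_cbox]] sub
    by (intro emeasure_mono) auto
  also have "\<dots> = emeasure lborel (cbox a b)" by (rule orth_invariant[OF of compact_cbox])
  also have "\<dots> = ennreal (\<Prod>i\<in>UNIV. b$i - a$i)"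
    using t by (intro emeasure_cbox_cart) (simp add: a_def b_def)
  also have "(\<Prod>i\<in>UNIV. b$i - a$i) = (\<Prod>i\<in>UNIV. if i \<in> J then 2*t else 2)"
    by (intro prod.cong) (auto simp: a_def b_def)
  also have "\<dots> = (2*t)^card J * 2^card (-J)"
    by (simp add: prod.If_cases Int_def Compl_eq)
  also have "\<dots> = 2^CARD('n) * t^(CARD('n) - dim V)"
  proof -
    have cJ': "card J = CARD('n) - dim V" using J(1) BW(5) dW by simp
    have "card (-J) = dim V" using cJ BV(5) by simp
    then have "(2*t)^card J * 2^card (-J) = 2^(card J + dim V) * t^card J"
      by (simp add: power_mult_distrib power_add)
    also have "card J + dim V = CARD('n)" using cJ' d by simp
    finally show ?thesis using cJ' by simp
  qed
  finally show ?thesis .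
qed


lemma term_bound:
  fixes p s0 :: real and k n j :: nat
  assumes p: "0 < p" "p \<le> k * s0" and s0: "0 < s0" "s0 < 1" and k: "1 \<le> k" "k \<le> n"
  shows "2 powr (p * Suc j) * (2^n * ((1/2)^j)^k) \<le> 4^n * (2 powr (-(1-s0)))^j"
proof -
  have e1: "2 powr (p * Suc j) = 2 powr p * 2 powr (p * j)"
  proof -
    have "p * Suc j = p + p * j" by (simp add: distrib_left)
    then show ?thesis by (simp only: powr_add)
  qed
  have e2: "((1/2::real)^j)^k = 2 powr (- (real j * real k))"
  proof -
    have "((1/2::real)^j)^k = 1 / 2^(j*k)" by (simp add: power_mult power_one_over)
    also have "(2::real)^(j*k) = 2 powr (real j * real k)"
      using powr_realpow[of "2::real" "j*k"] by (simp only: of_nat_mult zero_less_numeral)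
    also have "1 / 2 powr (real j * real k) = 2 powr (- (real j * real k))"
      by (rule powr_minus_divide[symmetric])
    finally show ?thesis .
  qed
  have e3: "(2 powr (-(1-s0)))^j = 2 powr (-(1-s0) * j)"
  proof -
    have "(2 powr (-(1-s0)))^j = (2 powr (-(1-s0))) powr (real j)" by (rule powr_realpow[symmetric]) simp
    also have "\<dots> = 2 powr (-(1-s0) * j)" by (rule powr_powr)
    finally show ?thesis .
  qed
  have pk: "p - k \<le> -(1 - s0)"
  proof -
    have "1 * (1 - s0) \<le> real k * (1 - s0)" by (rule mult_right_mono) (use k s0 in auto)
    then have "real k * s0 - real k \<le> -(1-s0)" by (simp add: algebra_simps)
    then show ?thesis using p by linarith
  qed
  have "(p - k) * j \<le> -(1-s0) * j" by (rule mult_right_mono[OF pk]) simp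
  then have i1: "2 powr ((p - k) * j) \<le> 2 powr (-(1-s0) * j)" by (rule powr_mono) simp
  have i1': "2 powr (p * j) * 2 powr (- (real j * real k)) = 2 powr ((p - k) * j)"
  proof -
    have "2 powr (p * j) * 2 powr (- (real j * real k)) = 2 powr (p * j + - (real j * real k))"
      by (rule powr_add[symmetric])
    also have "p * j + - (real j * real k) = (p - k) * j" by (simp add: algebra_simps)
    finally show ?thesis .
  qed
  have i2: "2 powr p \<le> 2^n"
  proof -
    have "real k * s0 \<le> real k" by (rule mult_left_le) (use s0 in auto)
    then have "p \<le> n" using p k by linarith
    then have "2 powr p \<le> 2 powr (real n)" by (rule powr_mono) simp
    also have "2 powr (real n) = (2::real)^n" by (rule powr_realpow) simp
    finally show ?thesis .
  qed
  have "2 powr (p * Suc j) * (2^n * ((1/2)^j)^k) = 2^n * 2 powr p * (2 powr (p * j) * 2 powr (- (real j * real k)))"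
    by (simp only: e1 e2 mult_ac)
  also have "\<dots> = 2^n * 2 powr p * 2 powr ((p - k) * j)" by (simp only: i1')
  also have "\<dots> \<le> 2^n * 2^n * 2 powr (-(1-s0) * j)"
    using i1 i2 by (intro mult_mono) auto
  also have "\<dots> = 4^n * (2 powr (-(1-s0)))^j"
  proof -
    have "(2::real)^n * 2^n = 4^n" by (simp add: power_mult_distrib[symmetric])
    then show ?thesis by (simp only: e3)
  qed
  finally show ?thesis .
qed

lemma infdist_meas[measurable]: "(\<lambda>x. infdist x V) \<in> borel_measurable borel"
  by (intro borel_measurable_continuous_onI continuous_on_infdist continuous_on_id)

lemma gfun_meas[measurable]: "gfun a V \<in> borel_measurable borel"
  unfolding gfun_def by measurable

lemma half_pow_powr:
  fixes p :: real
  assumes "0 < p"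
  shows "((1/2::real)^(Suc j)) powr (-p) = 2 powr (p * Suc j)"
proof -
  have "(1/2::real)^(Suc j) = 2 powr (- real (Suc j))"
  proof -
    have "(1/2::real)^(Suc j) = 1 / 2^(Suc j)" by (simp add: power_one_over)
    also have "(2::real)^(Suc j) = 2 powr (real (Suc j))" by (rule powr_realpow[symmetric]) simp
    also have "1 / 2 powr (real (Suc j)) = 2 powr (- real (Suc j))" by (rule powr_minus_divide[symmetric])
    finally show ?thesis .
  qed
  then have "((1/2::real)^(Suc j)) powr (-p) = 2 powr (- real (Suc j) * - p)" by (simp only: powr_powr)
  also have "- real (Suc j) * - p = p * Suc j" by (simp add: algebra_simps)
  finally show ?thesis .
qed

lemma ennreal_le_suminf: "(f::nat \<Rightarrow> ennreal) j \<le> suminf f"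
proof -
  have "sum f {j} \<le> suminf f" by (rule sum_le_suminf) auto
  then show ?thesis by simp
qed

lemma pointwise_dyadic:
  fixes V :: "(real^'n::finite) set" and a p :: real
  assumes V: "subspace V" and a: "a < 0" and pa: "p = -2*a"
  shows "indicator (cball 0 1) x * gfun a V x \<le>
    (\<Sum>j. ennreal (2 powr (p * Suc j)) * indicator (cball 0 1 \<inter> {x. infdist x V \<le> (1/2)^j}) x)"
proof (cases "x \<in> cball 0 1")
  case False
  then show ?thesis by simp
next
  case True
  have p: "p > 0" using a pa by linarith
  define r where "r = infdist x V"
  have r1: "r \<le> 1"
  proof -
    have "r \<le> dist x 0" unfolding r_def by (rule infdist_le) (rule subspace_0[OF V])
    then show ?thesis using True by simp
  qed
  have r0: "r \<ge> 0" by (simp add: r_def infdist_nonneg)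
  have c1: "1 \<le> 2 powr (p * Suc j)" for j :: nat using p by (intro ge_one_powr_ge_zero) auto
  show ?thesis
  proof (cases "r = 0")
    case True
    have mem: "x \<in> cball 0 1 \<inter> {x. infdist x V \<le> (1/2)^j}" for j
      using \<open>x \<in> cball 0 1\<close> True by (simp add: r_def)
    have inf: "(\<Sum>j. ennreal (2 powr (p * Suc j))) = top"
    proof (rule ccontr)
      assume "(\<Sum>j. ennreal (2 powr (p * Suc j))) \<noteq> top"
      then have "summable (\<lambda>j. 2 powr (p * Suc j))" by (intro summable_suminf_not_top) auto
      then have T: "(\<lambda>j. 2 powr (p * Suc j)) \<longlonglongrightarrow> 0" by (rule summable_LIMSEQ_zero)
      have "eventually (\<lambda>j. 2 powr (p * Suc j) < 1) sequentially"
        by (rule order_tendstoD(2)[OF T]) simp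
      then obtain N where "\<forall>n\<ge>N. 2 powr (p * Suc n) < 1" unfolding eventually_sequentially by blast
      then have "2 powr (p * Suc N) < 1" by blast
      then show False using c1[of N] by simp
    qed
    have "(\<Sum>j. ennreal (2 powr (p * Suc j)) * indicator (cball 0 1 \<inter> {x. infdist x V \<le> (1/2)^j}) x)
        = (\<Sum>j. ennreal (2 powr (p * Suc j)))"
      using mem by (simp only: indicator_simps mult_1_right)
    also have "\<dots> = top" by (rule inf)
    finally show ?thesis by simp
  next
    case False
    then have rp: "r > 0" using r0 by simp
    have "\<exists>j. \<not> ((1/2::real)^j < r) \<and> (1/2)^(Suc j) < r"
    proof (rule exists_least_lemma)
      show "\<not> (1/2::real)^0 < r" using r1 by simp
      show "\<exists>n. (1/2::real)^n < r" using real_arch_pow_inv[OF rp, of "1/2"] by simp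
    qed
    then obtain j where j1: "r \<le> (1/2)^j" and j2: "(1/2)^(Suc j) < r" by (auto simp: not_less)
    have mem: "x \<in> cball 0 1 \<inter> {x. infdist x V \<le> (1/2)^j}"
      using \<open>x \<in> cball 0 1\<close> j1 by (simp add: r_def)
    have "r powr (-p) \<le> ((1/2)^(Suc j)) powr (-p)"
      using p j2 by (intro powr_mono2') auto
    also have "\<dots> = 2 powr (p * Suc j)" by (rule half_pow_powr[OF p])
    finally have le0: "r powr (-p) \<le> 2 powr (p * Suc j)" .
    have m2: "2*a = -p" using pa by simp
    have le: "r powr (2*a) \<le> 2 powr (p * Suc j)" using le0 by (simp only: m2)
    have g: "gfun a V x = ennreal (r powr (2*a))"
      using False by (simp add: gfun_def r_def)
    have "indicator (cball 0 1) x * gfun a V x = ennreal (r powr (2*a))"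
      using \<open>x \<in> cball 0 1\<close> by (simp add: g)
    also have "\<dots> \<le> ennreal (2 powr (p * Suc j))"
      using le by (rule ennreal_leI)
    also have "\<dots> = ennreal (2 powr (p * Suc j)) * indicator (cball 0 1 \<inter> {x. infdist x V \<le> (1/2)^j}) x"
      using mem by (simp only: indicator_simps mult_1_right)
    also have "\<dots> \<le> (\<Sum>j. ennreal (2 powr (p * Suc j)) * indicator (cball 0 1 \<inter> {x. infdist x V \<le> (1/2)^j}) x)"
      by (rule ennreal_le_suminf)
    finally show ?thesis .
  qed
qed

lemma ball_bound:
  fixes V :: "(real^'n::finite) set" and a s0 :: real
  assumes V: "subspace V" and d: "dim V < CARD('n)" and s0: "0 < s0" "s0 < 1"
    and a: "a < 0" and ak: "-2*a \<le> real (CARD('n) - dim V) * s0"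
  shows "(\<integral>\<^sup>+ x. indicator (cball 0 1) x * gfun a V x \<partial>lborel)
           \<le> ennreal (4^CARD('n) / (1 - 2 powr (-(1-s0))))"
proof -
  define p where "p = -2*a"
  define k where "k = CARD('n) - dim V"
  define n where "n = CARD('n)"
  define q :: real where "q = 2 powr (-(1-s0))"
  define T where "T j = cball (0::real^'n) 1 \<inter> {x. infdist x V \<le> (1/2)^j}" for j :: nat
  have p1: "0 < p" using a unfolding p_def by simp
  have p2: "p \<le> k * s0" using ak unfolding p_def k_def .
  note p = p1 p2
  have k: "1 \<le> k" "k \<le> n" using d by (simp_all add: k_def n_def)
  have q1: "0 < q" by (simp add: q_def)
  have "q < 2 powr 0" unfolding q_def by (rule powr_less_mono) (use s0 in auto)
  then have q2: "q < 1" by simp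
  note q = q1 q2
  have Tc: "closed (T j)" for j
    unfolding T_def by (intro closed_Int closed_cball closed_Collect_le continuous_on_infdist continuous_on_id continuous_on_const)
  have Tm: "T j \<in> sets lborel" for j using Tc[of j] by simp
  have meas: "(\<lambda>x. ennreal c * indicator (T j) x) \<in> borel_measurable lborel" for j c
    using Tm[of j] by (intro borel_measurable_times_ennreal borel_measurable_const borel_measurable_indicator)
  have tb: "emeasure lborel (T j) \<le> ennreal (2^n * ((1/2)^j)^k)" for j
    unfolding T_def n_def k_def by (rule tube_bound[OF V d]) simp
  have "(\<integral>\<^sup>+ x. indicator (cball 0 1) x * gfun a V x \<partial>lborel)
        \<le> (\<integral>\<^sup>+ x. (\<Sum>j. ennreal (2 powr (p * Suc j)) * indicator (T j) x) \<partial>lborel)"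
    by (rule nn_integral_mono) (unfold T_def, rule pointwise_dyadic[OF V a p_def])
  also have "\<dots> = (\<Sum>j. (\<integral>\<^sup>+ x. ennreal (2 powr (p * Suc j)) * indicator (T j) x \<partial>lborel))"
    by (rule nn_integral_suminf) (rule meas)
  also have "\<dots> = (\<Sum>j. ennreal (2 powr (p * Suc j)) * emeasure lborel (T j))"
    by (simp only: nn_integral_cmult_indicator[OF Tm])
  also have "\<dots> \<le> (\<Sum>j. ennreal (4^n * q^j))"
  proof (rule suminf_le)
    fix j
    have "ennreal (2 powr (p * Suc j)) * emeasure lborel (T j) \<le> ennreal (2 powr (p * Suc j)) * ennreal (2^n * ((1/2)^j)^k)"
      by (rule mult_left_mono[OF tb]) simp
    also have "\<dots> = ennreal (2 powr (p * Suc j) * (2^n * ((1/2)^j)^k))"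
      by (rule ennreal_mult[symmetric]) simp_all
    also have "\<dots> \<le> ennreal (4^n * q^j)"
      unfolding q_def by (rule ennreal_leI, rule term_bound[OF p s0 k])
    finally show "ennreal (2 powr (p * Suc j)) * emeasure lborel (T j) \<le> ennreal (4^n * q^j)" .
  qed auto
  also have "\<dots> = ennreal (\<Sum>j. 4^n * q^j)"
    using q by (intro suminf_ennreal2 summable_mult summable_geometric) auto
  also have "(\<Sum>j. 4^n * q^j) = 4^n / (1 - q)"
    using q by (simp add: suminf_mult summable_geometric suminf_geometric)
  finally show ?thesis by (simp add: n_def q_def)
qed


lemma sets_sphere_measure: "sets (sphere_measure :: (real^'n::finite) measure) = sets (restrict_space borel (sphere 0 1))"
  by (simp add: sphere_measure_def)

lemma space_sphere_measure: "space (sphere_measure :: (real^'n::finite) measure) = sphere 0 1"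
  by (simp add: sphere_measure_def space_restrict_space)

lemma meas_proj: "(\<lambda>x::real^'n::finite. x /\<^sub>R norm x) \<in> measurable (restrict_space lborel (cball 0 1 - {0})) (restrict_space borel (sphere 0 1))"
proof (rule measurable_restrict_space3)
  show "(\<lambda>x::real^'n. x /\<^sub>R norm x) \<in> measurable lborel borel" by simp
  show "(\<lambda>x::real^'n. x /\<^sub>R norm x) \<in> cball 0 1 - {0} \<rightarrow> sphere 0 1" by auto
qed

lemma id_meas_sphere: "(\<lambda>x. x) \<in> measurable (sphere_measure :: (real^'n::finite) measure) borel"
proof -
  have "(\<lambda>x. x) \<in> measurable (restrict_space borel (sphere (0::real^'n) 1)) borel"
    by (rule measurable_restrict_space1) simp
  then show ?thesis using measurable_cong_sets[OF sets_sphere_measure refl] by blast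
qed

lemma nn_integral_sphere:
  fixes f :: "real^'n::finite \<Rightarrow> ennreal"
  assumes f: "f \<in> borel_measurable borel"
  shows "(\<integral>\<^sup>+ y. f y \<partial>sphere_measure) =
    (\<integral>\<^sup>+ x. (ennreal (real CARD('n)) * f (x /\<^sub>R norm x)) * indicator (cball 0 1 - {0}) x \<partial>lborel)"
proof -
  let ?L = "restrict_space lborel (cball (0::real^'n) 1 - {0})"
  let ?N = "restrict_space borel (sphere (0::real^'n) 1)"
  let ?T = "\<lambda>x::real^'n. x /\<^sub>R norm x"
  have fN: "f \<in> borel_measurable ?N" by (rule measurable_restrict_space1[OF f])
  have fD: "f \<in> borel_measurable (distr ?L ?N ?T)"
    using fN measurable_cong_sets[of "distr ?L ?N ?T" ?N borel borel] by simp
  have "(\<integral>\<^sup>+ y. f y \<partial>sphere_measure) = (\<integral>\<^sup>+ y. ennreal (real CARD('n)) * f y \<partial>distr ?L ?N ?T)"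
    unfolding sphere_measure_def by (rule nn_integral_density[OF _ fD]) simp
  also have "\<dots> = (\<integral>\<^sup>+ x. ennreal (real CARD('n)) * f (?T x) \<partial>?L)"
    by (rule nn_integral_distr[OF meas_proj]) (use fD in simp)
  also have "\<dots> = (\<integral>\<^sup>+ x. (ennreal (real CARD('n)) * f (?T x)) * indicator (cball 0 1 - {0}) x \<partial>lborel)"
    by (rule nn_integral_restrict_space) simp
  finally show ?thesis .
qed

lemma finite_sphere_measure: "finite_measure (sphere_measure :: (real^'n::finite) measure)"
proof
  have "emeasure (sphere_measure :: (real^'n) measure) (space (sphere_measure :: (real^'n) measure)) = (\<integral>\<^sup>+ y. 1 \<partial>(sphere_measure :: (real^'n) measure))"
    by (simp add: nn_integral_const)
  also have "\<dots> = (\<integral>\<^sup>+ x. (ennreal (real CARD('n)) * 1) * indicator (cball (0::real^'n) 1 - {0}) x \<partial>lborel)"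
    by (rule nn_integral_sphere[where f="\<lambda>_::real^'n. 1"]) simp
  also have "\<dots> \<le> (\<integral>\<^sup>+ x. ennreal (real CARD('n)) * indicator (cball (0::real^'n) 1) x \<partial>lborel)"
    by (intro nn_integral_mono) (auto split: split_indicator)
  also have "\<dots> = ennreal (real CARD('n)) * emeasure lborel (cball (0::real^'n) 1)"
    by (rule nn_integral_cmult_indicator) simp
  also have "\<dots> < \<infinity>"
    using emeasure_bounded_finite[of "cball (0::real^'n) 1"] by (simp add: ennreal_mult_less_top less_top)
  finally show "emeasure (sphere_measure :: (real^'n) measure) (space sphere_measure) \<noteq> \<infinity>" by simp
qed

lemma infdist_scale_ge:
  fixes V :: "('a::euclidean_space) set"
  assumes V: "subspace V" and c: "0 < c" "c \<le> 1"
  shows "infdist x V \<le> infdist (x /\<^sub>R c) V"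
proof -
  have "infdist x V \<le> dist (x /\<^sub>R c) v" if "v \<in> V" for v
  proof -
    have "infdist x V \<le> dist x (c *\<^sub>R v)" by (rule infdist_le) (rule subspace_scale[OF V that])
    also have "dist x (c *\<^sub>R v) = c * dist (x /\<^sub>R c) v"
    proof -
      have "x - c *\<^sub>R v = c *\<^sub>R (x /\<^sub>R c - v)" using c by (simp add: algebra_simps)
      then show ?thesis using c by (simp add: dist_norm)
    qed
    also have "\<dots> \<le> dist (x /\<^sub>R c) v" using c by (simp add: mult_left_le_one_le)
    finally show ?thesis .
  qed
  moreover have "V \<noteq> {}" using subspace_0[OF V] by auto
  ultimately show ?thesis by (subst (2) infdist_notempty) (auto intro!: cINF_greatest)
qed

lemma gfun_proj_le:
  fixes V :: "(real^'n::finite) set"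
  assumes V: "subspace V" and a: "a < 0" and x: "x \<in> cball 0 1 - {0}"
  shows "gfun a V (x /\<^sub>R norm x) \<le> gfun a V x"
proof -
  have n: "0 < norm x" "norm x \<le> 1" using x by auto
  have le: "infdist x V \<le> infdist (x /\<^sub>R norm x) V" by (rule infdist_scale_ge[OF V n])
  show ?thesis
  proof (cases "infdist x V = 0")
    case True
    then show ?thesis by (simp add: gfun_def)
  next
    case False
    then have pos: "0 < infdist x V" using infdist_nonneg[of x V] by simp
    then have "infdist (x /\<^sub>R norm x) V powr (2*a) \<le> infdist x V powr (2*a)"
      using le a by (intro powr_mono2') auto
    then show ?thesis using pos le by (simp add: gfun_def ennreal_leI)
  qed
qed


lemma comp_meas:
  assumes "i \<in> I"
  shows "(\<lambda>w. w i) \<in> measurable (PiM I (\<lambda>_. sphere_measure :: (real^'n::finite) measure)) borel"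
  using measurable_compose[OF measurable_component_singleton[OF assms] id_meas_sphere] by simp

lemma gdet_meas:
  fixes S I :: "'m::finite set"
  assumes SI: "S \<subseteq> I"
  shows "(\<lambda>w. gdet S w) \<in> borel_measurable (PiM I (\<lambda>_. sphere_measure :: (real^'n::finite) measure))"
proof -
  have entry: "(\<lambda>w. gmat S w $ i $ j) \<in> borel_measurable (PiM I (\<lambda>_. sphere_measure :: (real^'n) measure))" for i j
  proof (cases "i \<in> S \<and> j \<in> S")
    case True
    then have "(\<lambda>w::'m \<Rightarrow> real^'n. gmat S w $ i $ j) = (\<lambda>w. w i \<bullet> w j)" by (simp add: gmat_def fun_eq_iff)
    moreover have "(\<lambda>w. w i \<bullet> w j) \<in> borel_measurable (PiM I (\<lambda>_. sphere_measure :: (real^'n) measure))"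
      using True SI by (intro borel_measurable_inner comp_meas) auto
    ultimately show ?thesis by simp
  next
    case False
    then have "(\<lambda>w::'m \<Rightarrow> real^'n. gmat S w $ i $ j) = (\<lambda>w. if i = j then 1 else 0)" by (auto simp: gmat_def fun_eq_iff)
    then show ?thesis by simp
  qed
  show ?thesis
    unfolding gdet_def det_def
    by (intro borel_measurable_sum borel_measurable_times borel_measurable_const borel_measurable_prod entry)
qed

lemma GP_meas:
  fixes S I :: "'m::finite set"
  assumes SI: "S \<subseteq> I"
  shows "(\<lambda>w. GP S a w) \<in> borel_measurable (PiM I (\<lambda>_. sphere_measure :: (real^'n::finite) measure))"
proof -
  have g[measurable]: "(\<lambda>w. gdet S w) \<in> borel_measurable (PiM I (\<lambda>_. sphere_measure :: (real^'n::finite) measure))"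
    by (rule gdet_meas[OF SI])
  show ?thesis unfolding GP_def by measurable
qed

lemma q_lt1:
  fixes s0 :: real
  assumes "0 < s0" "s0 < 1"
  shows "2 powr (-(1-s0)) < 1"
proof -
  have "2 powr (-(1-s0)) < 2 powr 0" by (rule powr_less_mono) (use assms in auto)
  then show ?thesis by simp
qed

lemma Bc_nonneg:
  fixes s0 :: real
  assumes "0 < s0" "s0 < 1"
  shows "0 \<le> 4^N / (1 - 2 powr (-(1-s0)))"
  using q_lt1[OF assms] by (intro divide_nonneg_nonneg) auto

lemma sphere_gfun_bound:
  fixes V :: "(real^'n::finite) set" and a s0 :: real
  assumes V: "subspace V" and d: "dim V < CARD('n)" and s0: "0 < s0" "s0 < 1"
    and a: "a < 0" and ak: "-2*a \<le> real (CARD('n) - dim V) * s0"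
  shows "(\<integral>\<^sup>+ y. gfun a V y \<partial>sphere_measure)
           \<le> ennreal (real CARD('n) * (4^CARD('n) / (1 - 2 powr (-(1-s0)))))"
proof -
  have mi: "(\<lambda>x. indicator (cball (0::real^'n) 1) x * gfun a V x) \<in> borel_measurable lborel"
    by (intro borel_measurable_times_ennreal borel_measurable_indicator) simp_all
  have "(\<integral>\<^sup>+ y. gfun a V y \<partial>sphere_measure)
      = (\<integral>\<^sup>+ x. (ennreal (real CARD('n)) * gfun a V (x /\<^sub>R norm x)) * indicator (cball 0 1 - {0}) x \<partial>lborel)"
    by (rule nn_integral_sphere[OF gfun_meas])
  also have "\<dots> \<le> (\<integral>\<^sup>+ x. ennreal (real CARD('n)) * (indicator (cball (0::real^'n) 1) x * gfun a V x) \<partial>lborel)"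
  proof (rule nn_integral_mono)
    fix x :: "real^'n"
    show "(ennreal (real CARD('n)) * gfun a V (x /\<^sub>R norm x)) * indicator (cball 0 1 - {0}) x
          \<le> ennreal (real CARD('n)) * (indicator (cball 0 1) x * gfun a V x)"
    proof (cases "x \<in> cball 0 1 - {0}")
      case True
      then show ?thesis using gfun_proj_le[OF V a True] by (simp add: mult_left_mono)
    next
      case False
      then show ?thesis by simp
    qed
  qed
  also have "\<dots> = ennreal (real CARD('n)) * (\<integral>\<^sup>+ x. indicator (cball (0::real^'n) 1) x * gfun a V x \<partial>lborel)"
    by (rule nn_integral_cmult[OF mi])
  also have "\<dots> \<le> ennreal (real CARD('n)) * ennreal (4^CARD('n) / (1 - 2 powr (-(1-s0))))"
    by (rule mult_left_mono[OF ball_bound[OF V d s0 a ak]]) simp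
  also have "\<dots> = ennreal (real CARD('n) * (4^CARD('n) / (1 - 2 powr (-(1-s0)))))"
    by (rule ennreal_mult[symmetric]) (use Bc_nonneg[OF s0] in simp_all)
  finally show ?thesis .
qed


lemma main_ind:
  fixes a s0 :: real
  assumes mn: "CARD('m::finite) < CARD('n::finite)" and s0: "0 < s0" "s0 < 1"
    and a: "a < 0" and ak: "-2*a \<le> real (CARD('n) - CARD('m) + 1) * s0"
  shows "(\<integral>\<^sup>+ w. GP S a (w :: 'm \<Rightarrow> real^'n) \<partial>PiM S (\<lambda>_. sphere_measure))
           \<le> ennreal ((real CARD('n) * (4^CARD('n) / (1 - 2 powr (-(1-s0)))))^card S)"
proof -
  define B where "B = real CARD('n) * (4^CARD('n) / (1 - 2 powr (-(1-s0))))"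
  have B0: "0 \<le> B" unfolding B_def by (rule mult_nonneg_nonneg[OF _ Bc_nonneg[OF s0]]) simp
  interpret P: product_sigma_finite "\<lambda>_::'m. sphere_measure :: (real^'n) measure"
    unfolding product_sigma_finite_def using finite_sphere_measure unfolding finite_measure_def by blast
  have "finite S" by simp
  then have "(\<integral>\<^sup>+ w. GP S a (w :: 'm \<Rightarrow> real^'n) \<partial>PiM S (\<lambda>_. sphere_measure)) \<le> ennreal (B^card S)"
  proof (induction S rule: finite_induct)
    case empty
    have "GP {} a w = 1" for w :: "'m \<Rightarrow> real^'n" by (simp add: GP_def gdet_empty)
    then show ?case by (simp add: PiM_empty nn_integral_count_space_finite)
  next
    case (insert k S)
    have "card (insert k S) \<le> CARD('m)" by (rule card_mono) simp_all
    then have cS: "card S < CARD('m)" using insert.hyps by simp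
    have inner: "(\<integral>\<^sup>+ y. GP (insert k S) a (x(k := y)) \<partial>sphere_measure) \<le> GP S a x * ennreal B"
      for x :: "'m \<Rightarrow> real^'n"
    proof -
      define V where "V = span (x ` S)"
      have eq: "GP (insert k S) a (x(k := y)) = GP S a x * gfun a V y" for y
      proof -
        have "GP (insert k S) a (x(k := y)) = GP S a (x(k:=y)) * gfun a (span ((x(k:=y)) ` S)) ((x(k:=y)) k)"
          by (rule GP_insert[OF insert.hyps(2)])
        moreover have "GP S a (x(k:=y)) = GP S a x"
        proof -
          have "gdet S (x(k:=y)) = gdet S x" by (rule gdet_cong) (use insert.hyps(2) in auto)
          then show ?thesis unfolding GP_def by simp
        qed
        moreover have "(x(k:=y)) ` S = x ` S" using insert.hyps(2) by auto
        ultimately show ?thesis by (simp add: V_def)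
      qed
      have V: "subspace V" by (simp add: V_def)
      have dV: "dim V \<le> card S"
      proof -
        have "dim V = dim (x ` S)" by (simp add: V_def)
        also have "\<dots> \<le> card (x ` S)" by (rule dim_le_card') simp
        also have "\<dots> \<le> card S" by (rule card_image_le) simp
        finally show ?thesis .
      qed
      have d: "dim V < CARD('n)" using dV cS mn by linarith
      have ak': "-2*a \<le> real (CARD('n) - dim V) * s0"
      proof -
        have "CARD('n) - CARD('m) + 1 \<le> CARD('n) - dim V" using dV cS mn by linarith
        then have "real (CARD('n) - CARD('m) + 1) * s0 \<le> real (CARD('n) - dim V) * s0"
          using s0 by (intro mult_right_mono) auto
        then show ?thesis using ak by linarith
      qed
      have "(\<integral>\<^sup>+ y. GP (insert k S) a (x(k := y)) \<partial>sphere_measure) = (\<integral>\<^sup>+ y. GP S a x * gfun a V y \<partial>sphere_measure)"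
        by (simp only: eq)
      also have "\<dots> = GP S a x * (\<integral>\<^sup>+ y. gfun a V y \<partial>sphere_measure)"
        by (rule nn_integral_cmult) (rule measurable_compose[OF id_meas_sphere gfun_meas])
      also have "\<dots> \<le> GP S a x * ennreal B"
        unfolding B_def by (rule mult_left_mono[OF sphere_gfun_bound[OF V d s0 a ak']]) simp
      finally show ?thesis .
    qed
    have "(\<integral>\<^sup>+ w. GP (insert k S) a (w :: 'm \<Rightarrow> real^'n) \<partial>PiM (insert k S) (\<lambda>_. sphere_measure :: (real^'n) measure))
        = (\<integral>\<^sup>+ x. (\<integral>\<^sup>+ y. GP (insert k S) a (x(k := y)) \<partial>(sphere_measure :: (real^'n) measure)) \<partial>PiM S (\<lambda>_. sphere_measure :: (real^'n) measure))"
      by (rule P.product_nn_integral_insert[OF insert.hyps(1,2)]) (rule GP_meas, simp)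
    also have "\<dots> \<le> (\<integral>\<^sup>+ x. GP S a x * ennreal B \<partial>PiM S (\<lambda>_. sphere_measure :: (real^'n) measure))"
      by (rule nn_integral_mono) (rule inner)
    also have "\<dots> = (\<integral>\<^sup>+ x. GP S a x \<partial>PiM S (\<lambda>_. sphere_measure :: (real^'n) measure)) * ennreal B"
      by (rule nn_integral_multc) (rule GP_meas, simp)
    also have "\<dots> \<le> ennreal (B ^ card S) * ennreal B"
      by (rule mult_right_mono[OF insert.IH]) simp
    also have "\<dots> = ennreal (B ^ card (insert k S))"
      using insert.hyps B0 by (simp add: ennreal_mult[symmetric] mult.commute)
    finally show ?case .
  qed
  then show ?thesis by (simp add: B_def)
qed

theorem lemma2p4:
  assumes "CARD('m::finite) < CARD('n::finite)"
    and "0 < s\<^sub>0" and "s\<^sub>0 < (1::real)"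
  shows "\<exists>C::real. C > 0 \<and>
           (\<forall>\<alpha>::real. - (real (CARD('n) - CARD('m) + 1) / 2) * s\<^sub>0 < \<alpha> \<and> \<alpha> < 0 \<longrightarrow>
              (\<integral>\<^sup>+ w. gram_power \<alpha> (w :: 'm \<Rightarrow> real ^ 'n)
                   \<partial>(PiM (UNIV :: 'm set) (\<lambda>_. sphere_measure))) \<le> ennreal C)"
proof -
  define B where "B = real CARD('n) * (4^CARD('n) / (1 - 2 powr (-(1-s\<^sub>0))))"
  have q: "2 powr (-(1-s\<^sub>0)) < 1" by (rule q_lt1) (use assms in auto)
  have Bp: "0 < B" unfolding B_def using q by (intro mult_pos_pos divide_pos_pos) auto
  show ?thesis
  proof (intro exI conjI allI impI)
    show "0 < B ^ CARD('m)" using Bp by simp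
    fix \<alpha> :: real
    assume H: "- (real (CARD('n) - CARD('m) + 1) / 2) * s\<^sub>0 < \<alpha> \<and> \<alpha> < 0"
    have ak: "-2*\<alpha> \<le> real (CARD('n) - CARD('m) + 1) * s\<^sub>0"
    proof -
      have "(real (CARD('n) - CARD('m) + 1) / 2) * s\<^sub>0 = (real (CARD('n) - CARD('m) + 1) * s\<^sub>0) / 2" by simp
      then show ?thesis using H by linarith
    qed
    have eq: "gram_power \<alpha> w = GP UNIV \<alpha> w" for w :: "'m \<Rightarrow> real^'n"
      by (simp add: gram_power_def GP_def gdet_UNIV)
    have "(\<integral>\<^sup>+ w. gram_power \<alpha> (w :: 'm \<Rightarrow> real ^ 'n) \<partial>(PiM (UNIV :: 'm set) (\<lambda>_. sphere_measure)))
        = (\<integral>\<^sup>+ w. GP UNIV \<alpha> (w :: 'm \<Rightarrow> real ^ 'n) \<partial>(PiM (UNIV :: 'm set) (\<lambda>_. sphere_measure)))"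
      by (simp only: eq)
    also have "\<dots> \<le> ennreal (B ^ card (UNIV :: 'm set))"
      unfolding B_def by (rule main_ind[OF assms(1) assms(2,3)]) (use H ak in auto)
    finally show "(\<integral>\<^sup>+ w. gram_power \<alpha> (w :: 'm \<Rightarrow> real ^ 'n) \<partial>(PiM (UNIV :: 'm set) (\<lambda>_. sphere_measure))) \<le> ennreal (B ^ CARD('m))" by simp
  qed
qed


end
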